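(* Let $0<\beta<1$, $T>0$, $n_T$ a positive integer, $\tau=T/n_T$, $t_k=k\tau$. Let $\varpi_j$ be defined by $(1-z)^\beta=\sum_{j\ge0}\varpi_j z^j$, $\varrho_j$ by $(1-z)^{-\beta}=\sum_{j\ge0}\varrho_jz^j$, $P_j:=\tau^\beta\varrho_j$, and for a sequence $w^0,\dots,w^{n_T}$ let $D_\tau^{(\beta)}w^k=\tau^{-\beta}\sum_{j=0}^k\varpi_{k-j}(w^j-w^0)$. Let $\{g^k\}_{k=0}^{n_T}$ and $\{\lambda_l\}_{l=0}^{n_T-1}$ be non-negative sequences, and assume there is a constant $\lambda$ independent of $\tau$ with $\lambda\ge\sum_{l=0}^{k-1}\lambda_l$ for $1\le k\le n_T$ and $\tau\le 1/\sqrt[\beta]{2\lambda(1+\beta)}$. Then for any non-negative sequence $\{v^k\}_{k=0}^{n_T}$ satisfying $$D_\tau^{(\beta)}v^k\le\sum_{l=1}^k\lambda_{k-l}v^l+g^k,\qquad 1\le k\le n_T,$$ it holds that $$v^k\le 2E_\beta(2\lambda t_k^\beta)\Big(v^0+\max_{1\le m\le k}\sum_{j=0}^mP_{m-j}\,g^{j}\Big),\qquad 1\le k\le n_T,$$ where $E_\beta(z)=\sum_{l=0}^\infty\frac{z^l}{\Gamma(1+l\beta)}$. *)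

theory Defs
  imports "HOL-Analysis.Analysis"
begin

text \<open>Coefficients of (1-z)^beta = sum varpi_j z^j (generalized binomial series).\<close>
definition varpi :: "real \<Rightarrow> nat \<Rightarrow> real" where
  "varpi \<beta> j = (-1) ^ j * (\<beta> gchoose j)"

text \<open>Coefficients of (1-z)^(-beta) = sum rho_j z^j.\<close>
definition rho :: "real \<Rightarrow> nat \<Rightarrow> real" where
  "rho \<beta> j = (-1) ^ j * ((- \<beta>) gchoose j)"

definition frac_diff :: "real \<Rightarrow> real \<Rightarrow> (nat \<Rightarrow> real) \<Rightarrow> nat \<Rightarrow> real" where
  "frac_diff \<beta> \<tau> w k = \<tau> powr (- \<beta>) * (\<Sum>j=0..k. varpi \<beta> (k - j) * (w j - w 0))"

definition mittag_leffler :: "real \<Rightarrow> real \<Rightarrow> real" where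
  "mittag_leffler \<beta> z = (\<Sum>l. z ^ l / Gamma (1 + real l * \<beta>))"

end

theory Submission imports Defs "HOL-Computational_Algebra.Formal_Power_Series" begin

lemma beta_scaled:
  fixes N a b :: real
  assumes N: "N > 0" and a: "a \<ge> 0" and b: "b > 0"
  shows "((\<lambda>s. (N - s) powr (b-1) * s powr a) has_integral (N powr (a+b) * Beta (a+1) b)) {0..N}"
proof -
  have 1: "((\<lambda>t. t powr a * (1-t) powr (b-1)) has_integral Beta (a+1) b) {0..1}"
    using has_integral_Beta_real[of "a+1" b] a b by simp
  have 2: "((\<lambda>x. (\<lambda>t. t powr a * (1-t) powr (b-1)) ((1/N) * x)) has_integral (1/\<bar>1/N\<bar>) *\<^sub>R Beta (a+1) b) ((\<lambda>x. x/(1/N)) ` {0..1})"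
    by (rule has_integral_stretch_real[OF 1]) (use N in auto)
  have img: "((\<lambda>x. x/(1/N)) ` {0..1}) = {0..N}"
    using N by (auto simp: image_iff intro!: bexI[of _ "_/N"] simp: field_simps)
  have 3: "((\<lambda>x. ((1/N) * x) powr a * (1-(1/N) * x) powr (b-1)) has_integral N * Beta (a+1) b) {0..N}"
    using 2 N unfolding img by simp
  have 4: "((\<lambda>x. N powr (a+b-1) * (((1/N) * x) powr a * (1-(1/N) * x) powr (b-1))) has_integral N powr (a+b-1) * (N * Beta (a+1) b)) {0..N}"
    by (rule has_integral_mult_right[OF 3])
  have eq: "N powr (a+b-1) * (((1/N) * x) powr a * (1-(1/N) * x) powr (b-1)) = (N - x) powr (b-1) * x powr a"
    if "x \<in> {0..N}" for x
  proof -
    have "(1/N) * x = x / N" by simp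
    moreover have "1 - (1/N) * x = (N - x) / N" using N by (simp add: field_simps)
    ultimately have "((1/N) * x) powr a * (1-(1/N) * x) powr (b-1) = (x powr a / N powr a) * ((N-x) powr (b-1) / N powr (b-1))"
      using that N by (simp add: powr_divide)
    moreover have "N powr (a+b-1) = N powr a * N powr (b-1)"
      using powr_add[of N a "b-1"] by (simp add: algebra_simps)
    ultimately show ?thesis using N by (simp add: field_simps)
  qed
  have 5: "N powr (a+b-1) * (N * Beta (a+1) b) = N powr (a+b) * Beta (a+1) b"
    using N by (simp add: powr_add powr_diff field_simps)
  show ?thesis
    using has_integral_cong[of "{0..N}", OF eq] 4 5 by auto
qed

lemma term_le_integral:
  fixes N k C a b :: real
  assumes fi: "(\<lambda>s. (N - s) powr (b-1) * s powr a) integrable_on {k..k+1}"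
    and k: "0 \<le> k" "k + 1 \<le> N" and a: "a \<ge> 0" and b: "b < 1"
  shows "(N - k) powr (b-1) * k powr a \<le> integral {k..k+1} (\<lambda>s. (N - s) powr (b-1) * s powr a)"
proof -
  define f where "f = (\<lambda>s. (N - s) powr (b-1) * s powr a)"
  define C where "C = (N - k) powr (b-1) * k powr a"
  define h where "h = (\<lambda>s. if s = N then C else f s)"
  have hi: "(h has_integral integral {k..k+1} f) {k..k+1}"
    by (rule has_integral_spike_finite[of "{N}" _ _ f]) (use fi f_def h_def in auto)
  have ci: "((\<lambda>s. C) has_integral C) {k..k+1}"
    using has_integral_const_real[of C k "k+1"] by simp
  have "C \<le> integral {k..k+1} f"
  proof (rule has_integral_le[OF ci hi])
    fix s assume s: "s \<in> {k..k+1}"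
    show "C \<le> h s"
    proof (cases "s = N")
      case True thus ?thesis by (simp add: h_def)
    next
      case False
      with s k have sN: "s < N" by auto
      have 1: "(N - k) powr (b-1) \<le> (N - s) powr (b-1)"
        by (rule powr_mono2') (use sN s b in auto)
      have 2: "k powr a \<le> s powr a"
        by (rule powr_mono2) (use s k a in auto)
      have "C \<le> (N - s) powr (b-1) * s powr a"
        unfolding C_def by (rule mult_mono[OF 1 2]) auto
      thus ?thesis using False by (simp add: h_def f_def)
    qed
  qed
  thus ?thesis by (simp add: C_def f_def)
qed

lemma sum_le_beta:
  fixes n :: nat and a b :: real
  assumes n: "n \<ge> 1" and a: "a \<ge> 0" and b: "0 < b" "b < 1"
  shows "(\<Sum>i\<in>{1..<n}. real i powr (b-1) * real (n-i) powr a) \<le> real n powr (a+b) * Beta (a+1) b"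
proof -
  define N where "N = real n"
  define f where "f = (\<lambda>s. (N - s) powr (b-1) * s powr a)"
  have N: "N > 0" using n by (simp add: N_def)
  have hi: "(f has_integral N powr (a+b) * Beta (a+1) b) {0..N}"
    unfolding f_def by (rule beta_scaled[OF N a b(1)])
  hence fi: "f integrable_on {0..N}" by blast
  have fnn: "\<forall>s\<in>{0..N}. 0 \<le> f s" by (simp add: f_def)
  have ind: "m < n \<Longrightarrow> (\<Sum>i\<in>{1..m}. real i powr (b-1) * real (n-i) powr a) \<le> integral {N - real m..N} f" for m
  proof (induction m)
    case 0 thus ?case by simp
  next
    case (Suc m)
    have IH: "(\<Sum>i\<in>{1..m}. real i powr (b-1) * real (n-i) powr a) \<le> integral {N - real m..N} f"
      using Suc by simp
    define k where "k = N - real m - 1"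
    have k: "0 \<le> k" "k + 1 \<le> N" using Suc.prems by (auto simp: k_def N_def)
    have sub: "{k..N} \<subseteq> {0..N}" using k by auto
    have fik: "f integrable_on {k..N}" by (rule integrable_on_subinterval[OF fi sub])
    have fik1: "f integrable_on {k..k+1}" by (rule integrable_on_subinterval[OF fi]) (use k in auto)
    have comb: "integral {k..k+1} f + integral {k+1..N} f = integral {k..N} f"
      by (rule Henstock_Kurzweil_Integration.integral_combine[OF _ _ fik]) (use k in auto)
    have t: "(N - k) powr (b-1) * k powr a \<le> integral {k..k+1} f"
      unfolding f_def by (rule term_le_integral[OF fik1[unfolded f_def] k a b(2)])
    have eq1: "real (Suc m) = N - k" by (simp add: k_def)
    have eq2: "real (n - Suc m) = k" using Suc.prems by (simp add: k_def N_def of_nat_diff)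
    have "(\<Sum>i\<in>{1..Suc m}. real i powr (b-1) * real (n-i) powr a)
        = (\<Sum>i\<in>{1..m}. real i powr (b-1) * real (n-i) powr a) + (N - k) powr (b-1) * k powr a"
      using eq1 eq2 by simp
    also have "\<dots> \<le> integral {N - real m..N} f + integral {k..k+1} f"
      using IH t by linarith
    also have "\<dots> = integral {N - real (Suc m)..N} f"
      using comb by (simp add: k_def algebra_simps)
    finally show ?case .
  qed
  have "(\<Sum>i\<in>{1..<n}. real i powr (b-1) * real (n-i) powr a) = (\<Sum>i\<in>{1..n-1}. real i powr (b-1) * real (n-i) powr a)"
    using n by (intro sum.cong) auto
  also have "\<dots> \<le> integral {N - real (n-1)..N} f" using ind[of "n-1"] n by simp
  also have "\<dots> \<le> integral {0..N} f"
    by (rule integral_subset_le[OF _ integrable_on_subinterval[OF fi] fi fnn]) (use n N_def in auto)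
  also have "\<dots> = N powr (a+b) * Beta (a+1) b" using hi by (simp add: integral_unique)
  finally show ?thesis by (simp add: N_def)
qed

lemma Gamma_plus1_pos: "(x::real) > 0 \<Longrightarrow> Gamma (x + 1) = x * Gamma x"
proof -
  assume "x > 0"
  hence "x \<notin> \<int>\<^sub>\<le>\<^sub>0" by (auto elim!: nonpos_Ints_cases)
  thus ?thesis by (rule Gamma_plus1)
qed

lemma lnGamma_convex_pt:
  fixes x y t :: real
  assumes "x > 0" "y > 0" "0 \<le> t" "t \<le> 1"
  shows "ln (Gamma ((1 - t) * x + t * y)) \<le> (1 - t) * ln (Gamma x) + t * ln (Gamma y)"
  using convex_onD[OF log_convex_Gamma_real, of t x y] assms by (simp add: o_def)

lemma Gamma_wendel:
  fixes x b :: real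
  assumes x: "x > 0" and b: "0 \<le> b" "b \<le> 1"
  shows "Gamma (x + b) \<le> Gamma x * x powr b"
proof -
  have "ln (Gamma ((1 - b) * x + b * (x + 1))) \<le> (1 - b) * ln (Gamma x) + b * ln (Gamma (x + 1))"
    by (rule lnGamma_convex_pt) (use assms in auto)
  moreover have "(1 - b) * x + b * (x + 1) = x + b" by (simp add: algebra_simps)
  moreover have "Gamma (x + 1) = x * Gamma x" by (rule Gamma_plus1_pos[OF x])
  moreover have "ln (x * Gamma x) = ln x + ln (Gamma x)" by (rule ln_mult_pos[OF x Gamma_real_pos[OF x]])
  ultimately have "ln (Gamma (x + b)) \<le> ln (Gamma x) + b * ln x" by (simp add: algebra_simps)
  hence "exp (ln (Gamma (x + b))) \<le> exp (ln (Gamma x) + b * ln x)" by simp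
  thus ?thesis using x b Gamma_real_pos[OF x] by (simp add: exp_add powr_def)
qed

lemma Gamma_lower:
  fixes x b :: real
  assumes x: "x > 0" and b: "0 \<le> b" "b \<le> 1"
  shows "Gamma (x + 1) \<le> Gamma (x + b) * (x + b) powr (1 - b)"
proof -
  have xb: "x + b > 0" using x b by simp
  have "ln (Gamma ((1 - (1-b)) * (x+b) + (1-b) * (x + b + 1))) \<le> (1 - (1-b)) * ln (Gamma (x+b)) + (1-b) * ln (Gamma (x + b + 1))"
    by (rule lnGamma_convex_pt) (use assms in auto)
  moreover have "(1 - (1-b)) * (x+b) + (1-b) * (x + b + 1) = x + 1" by (simp add: algebra_simps)
  moreover have "Gamma (x + b + 1) = (x+b) * Gamma (x+b)" by (rule Gamma_plus1_pos[OF xb])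
  moreover have "ln ((x+b) * Gamma (x+b)) = ln (x+b) + ln (Gamma (x+b))" by (rule ln_mult_pos[OF xb Gamma_real_pos[OF xb]])
  ultimately have "ln (Gamma (x + 1)) \<le> ln (Gamma (x+b)) + (1-b) * ln (x+b)" by (simp add: algebra_simps)
  hence "exp (ln (Gamma (x + 1))) \<le> exp (ln (Gamma (x+b)) + (1-b) * ln (x+b))" by simp
  thus ?thesis using x xb b Gamma_real_pos[OF xb] Gamma_real_pos[of "x+1"] by (simp add: exp_add powr_def)
qed

lemma rho_pochhammer: "rho b j = pochhammer b j / fact j"
  unfolding rho_def gbinomial_pochhammer by (simp add: power_mult_distrib[symmetric])

lemma rho_nonneg: "b > 0 \<Longrightarrow> rho b j \<ge> 0"
  unfolding rho_pochhammer by (simp add: pochhammer_pos less_imp_le)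

lemma rho_0: "rho b 0 = 1" by (simp add: rho_def)

lemma rho_bound:
  fixes b :: real and j :: nat
  assumes b: "0 < b" "b < 1" and j: "j \<ge> 1"
  shows "rho b j \<le> real j powr (b-1) / Gamma b"
proof -
  have nz: "b \<notin> \<int>\<^sub>\<le>\<^sub>0" using b by (auto elim!: nonpos_Ints_cases)
  have jp: "real j > 0" using j by simp
  have r: "rho b j = Gamma (b + real j) / Gamma b / fact j"
    unfolding rho_pochhammer pochhammer_Gamma[OF nz] by simp
  have fj: "fact j = real j * Gamma (real j)"
  proof -
    obtain m where m: "j = Suc m" using j by (cases j) auto
    have "Gamma (real j) = fact m" using Gamma_fact[of m] m by simp
    thus ?thesis using m by simp
  qed
  have w: "Gamma (real j + b) \<le> Gamma (real j) * real j powr b"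
    by (rule Gamma_wendel) (use jp b in auto)
  have gb: "Gamma b > 0" using b by simp
  have gj: "Gamma (real j) > 0" using jp by simp
  have gj': "Gamma (real j) \<noteq> 0" using gj by simp
  have gb': "Gamma b \<noteq> 0" using gb by simp
  have "rho b j = Gamma (real j + b) / (Gamma b * (real j * Gamma (real j)))"
    using r fj by (simp add: add.commute)
  also have "\<dots> \<le> Gamma (real j) * real j powr b / (Gamma b * (real j * Gamma (real j)))"
    by (rule divide_right_mono[OF w]) (use gb gj jp in simp)
  also have "\<dots> = real j powr b / real j / Gamma b" using gj' gb' jp by (simp add: field_simps)
  also have "real j powr b / real j = real j powr (b - 1)" using jp by (simp add: powr_diff)
  finally show ?thesis .
qed

lemma powr_pow_pos: "(x::real) > 0 \<Longrightarrow> (x powr b) ^ l = x powr (b * real l)"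
  by (simp add: powr_realpow[symmetric] powr_powr)

lemma key_sum:
  fixes b \<tau> :: real and n l :: nat
  assumes b: "0 < b" "b < 1" and n: "n \<ge> 1" and tau: "\<tau> > 0"
  shows "\<tau> powr b * (\<Sum>i\<in>{1..<n}. rho b i * ((real (n-i) * \<tau>) powr b) ^ l / Gamma (1 + real l * b))
         \<le> ((real n * \<tau>) powr b) ^ Suc l / Gamma (1 + real (Suc l) * b)"
proof -
  define a where "a = b * real l"
  have a: "a \<ge> 0" using b by (simp add: a_def)
  have gb: "Gamma b > 0" using b by simp
  have ga: "Gamma (1 + a) > 0" using a by simp
  have gab: "Gamma (a + 1 + b) > 0" using a b by simp
  have "(\<Sum>i\<in>{1..<n}. rho b i * ((real (n-i) * \<tau>) powr b) ^ l)
      = (\<Sum>i\<in>{1..<n}. rho b i * (real (n-i) powr a * \<tau> powr a))"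
  proof (rule sum.cong[OF refl])
    fix i assume i: "i \<in> {1..<n}"
    hence "real (n-i) * \<tau> > 0" using tau by auto
    hence "((real (n-i) * \<tau>) powr b) ^ l = (real (n-i) * \<tau>) powr a"
      unfolding a_def by (rule powr_pow_pos)
    also have "\<dots> = real (n-i) powr a * \<tau> powr a" using tau by (simp add: powr_mult)
    finally show "rho b i * ((real (n-i) * \<tau>) powr b) ^ l = rho b i * (real (n-i) powr a * \<tau> powr a)" by simp
  qed
  also have "\<dots> \<le> (\<Sum>i\<in>{1..<n}. (real i powr (b-1) / Gamma b) * (real (n-i) powr a * \<tau> powr a))"
    by (rule sum_mono, rule mult_right_mono) (use rho_bound b in auto)
  also have "\<dots> = \<tau> powr a / Gamma b * (\<Sum>i\<in>{1..<n}. real i powr (b-1) * real (n-i) powr a)"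
    by (simp add: sum_distrib_left field_simps)
  also have "\<dots> \<le> \<tau> powr a / Gamma b * (real n powr (a+b) * Beta (a+1) b)"
    by (rule mult_left_mono[OF sum_le_beta[OF n a b]]) (use gb in simp)
  also have "\<dots> = \<tau> powr a * real n powr (a+b) * Gamma (a+1) / Gamma (a+1+b)"
    using gb by (simp add: Beta_def field_simps)
  finally have S: "(\<Sum>i\<in>{1..<n}. rho b i * ((real (n-i) * \<tau>) powr b) ^ l)
      \<le> \<tau> powr a * real n powr (a+b) * Gamma (a+1) / Gamma (a+1+b)" .
  have "\<tau> powr b * (\<Sum>i\<in>{1..<n}. rho b i * ((real (n-i) * \<tau>) powr b) ^ l / Gamma (1 + real l * b))
      = \<tau> powr b / Gamma (1 + a) * (\<Sum>i\<in>{1..<n}. rho b i * ((real (n-i) * \<tau>) powr b) ^ l)"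
    by (simp add: sum_divide_distrib[symmetric] a_def mult.commute)
  also have "\<dots> \<le> \<tau> powr b / Gamma (1 + a) * (\<tau> powr a * real n powr (a+b) * Gamma (a+1) / Gamma (a+1+b))"
    by (rule mult_left_mono[OF S]) (use ga in simp)
  also have "\<dots> = (\<tau> powr (a+b) * real n powr (a+b)) / Gamma (a+1+b)"
    using ga by (simp add: powr_add field_simps)
  also have "\<dots> = (real n * \<tau>) powr (b * real (Suc l)) / Gamma (1 + real (Suc l) * b)"
    using tau by (simp add: powr_mult a_def algebra_simps)
  also have "\<dots> = ((real n * \<tau>) powr b) ^ Suc l / Gamma (1 + real (Suc l) * b)"
  proof -
    have pos: "real n * \<tau> > 0" using tau n by simp
    show ?thesis by (subst powr_pow_pos[OF pos]) simp
  qed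
  finally show ?thesis .
qed

lemma Gamma_ratio_lower:
  fixes x b :: real
  assumes x: "x \<ge> 1" and b: "0 < b" "b < 1"
  shows "Gamma x * x powr b / 2 \<le> Gamma (x + b)"
proof -
  have x0: "x > 0" using x by simp
  have gx: "Gamma x > 0" using x0 by simp
  have L: "Gamma (x + 1) \<le> Gamma (x + b) * (x + b) powr (1 - b)"
    by (rule Gamma_lower) (use x0 b in auto)
  have p: "(x + b) powr (1 - b) \<le> (2 * x) powr (1 - b)"
    by (rule powr_mono2) (use x b in auto)
  have "(2 * x) powr (1 - b) = 2 powr (1 - b) * x powr (1 - b)" using x0 by (simp add: powr_mult)
  also have "\<dots> \<le> 2 * x powr (1 - b)"
    by (rule mult_right_mono) (use b powr_le_cancel_iff[of 2 "1-b" 1] in auto)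
  finally have p2: "(x + b) powr (1 - b) \<le> 2 * x powr (1 - b)" using p by linarith
  have "x * Gamma x = Gamma (x + 1)" using Gamma_plus1_pos[OF x0] by simp
  also have "\<dots> \<le> Gamma (x + b) * (x + b) powr (1 - b)" by (rule L)
  also have "\<dots> \<le> Gamma (x + b) * (2 * x powr (1 - b))"
    by (rule mult_left_mono[OF p2]) (use Gamma_real_pos[of "x+b"] x0 b in simp)
  finally have "x * Gamma x \<le> Gamma (x + b) * (2 * x powr (1 - b))" .
  hence "x * Gamma x / (2 * x powr (1 - b)) \<le> Gamma (x + b)"
    using x0 by (simp add: divide_le_eq)
  moreover have "x * Gamma x / (2 * x powr (1 - b)) = Gamma x * x powr b / 2"
    using x0 by (simp add: powr_diff field_simps)
  ultimately show ?thesis by simp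
qed

lemma ml_summable:
  fixes b z :: real
  assumes b: "0 < b" "b < 1" and z: "z \<ge> 0"
  shows "summable (\<lambda>l. z ^ l / Gamma (1 + real l * b))"
proof -
  obtain N :: nat where N: "(4 * z + 1) powr (1 / b) / b < real N"
    using reals_Archimedean2 by blast
  show ?thesis
  proof (rule summable_ratio_test[of "1/2" N])
    fix l assume l: "N \<le> l"
    define x where "x = 1 + real l * b"
    have x1: "x \<ge> 1" using b by (simp add: x_def)
    have gx: "Gamma x > 0" using x1 by simp
    have "(4 * z + 1) powr (1 / b) < real N * b" using N b by (simp add: divide_less_eq)
    also have "real N * b \<le> real l * b" using l b by (simp add: mult_right_mono)
    finally have "(4 * z + 1) powr (1 / b) < real l * b" .
    hence "(4 * z + 1) powr (1 / b) \<le> x" by (simp add: x_def)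
    hence "((4 * z + 1) powr (1 / b)) powr b \<le> x powr b"
      by (intro powr_mono2) (use b in auto)
    hence xb: "4 * z + 1 \<le> x powr b" using b z by (simp add: powr_powr)
    have G: "Gamma x * x powr b / 2 \<le> Gamma (x + b)" by (rule Gamma_ratio_lower[OF x1 b])
    have "Gamma x * (4 * z + 1) \<le> Gamma x * x powr b" by (rule mult_left_mono[OF xb]) (use gx in simp)
    moreover have "Gamma x * (4 * z + 1) = 4 * (z * Gamma x) + Gamma x" by (simp add: algebra_simps)
    moreover have "2 * z * Gamma x = 2 * (z * Gamma x)" by simp
    ultimately have "2 * z * Gamma x \<le> Gamma x * x powr b / 2" using gx by linarith
    hence G2: "2 * z * Gamma x \<le> Gamma (x + b)" using G by linarith
    have gxb: "Gamma (x + b) > 0" using x1 b by simp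
    have e: "1 + real (Suc l) * b = x + b" by (simp add: x_def algebra_simps)
    have "z ^ Suc l / Gamma (x + b) \<le> 1/2 * (z ^ l / Gamma x)"
    proof -
      have "z ^ Suc l * (2 * Gamma x) = z ^ l * (2 * z * Gamma x)" by (simp add: algebra_simps)
      also have "\<dots> \<le> z ^ l * Gamma (x + b)" by (rule mult_left_mono[OF G2]) (use z in simp)
      finally show ?thesis using gx gxb by (simp add: field_simps)
    qed
    moreover have n1: "norm (z ^ Suc l / Gamma (1 + real (Suc l) * b)) = z ^ Suc l / Gamma (x + b)"
      unfolding e using z gxb by simp
    moreover have n2: "norm (z ^ l / Gamma (1 + real l * b)) = z ^ l / Gamma x"
      using z gx unfolding x_def by simp
    ultimately show "norm (z ^ Suc l / Gamma (1 + real (Suc l) * b)) \<le> 1/2 * norm (z ^ l / Gamma (1 + real l * b))"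
      by simp
  qed simp
qed

lemma ml_step:
  fixes b \<tau> \<mu> :: real and n :: nat
  assumes b: "0 < b" "b < 1" and n: "n \<ge> 1" and tau: "\<tau> > 0" and mu: "\<mu> \<ge> 0"
  shows "1 + \<mu> * \<tau> powr b * (\<Sum>i\<in>{1..<n}. rho b i * mittag_leffler b (\<mu> * (real (n-i) * \<tau>) powr b))
         \<le> mittag_leffler b (\<mu> * (real n * \<tau>) powr b)"
proof -
  define t where "t = (\<lambda>z (l::nat). z ^ l / Gamma (1 + real l * b))"
  define z where "z = (\<lambda>k::nat. (real k * \<tau>) powr b)"
  have z0: "z k \<ge> 0" for k by (simp add: z_def)
  have sm: "summable (t (\<mu> * z k))" for k
    unfolding t_def by (rule ml_summable[OF b]) (use mu z0 in simp)
  have ml: "mittag_leffler b (\<mu> * z k) = suminf (t (\<mu> * z k))" for k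
    by (simp add: mittag_leffler_def t_def)
  have "\<mu> * \<tau> powr b * (\<Sum>i\<in>{1..<n}. rho b i * suminf (t (\<mu> * z (n-i))))
      = \<mu> * \<tau> powr b * (\<Sum>i\<in>{1..<n}. suminf (\<lambda>l. rho b i * t (\<mu> * z (n-i)) l))"
    using suminf_mult[OF sm] by simp
  also have "\<dots> = \<mu> * \<tau> powr b * suminf (\<lambda>l. \<Sum>i\<in>{1..<n}. rho b i * t (\<mu> * z (n-i)) l)"
    by (subst suminf_sum) (use summable_mult[OF sm] in auto)
  also have "\<dots> = suminf (\<lambda>l. \<mu> * \<tau> powr b * (\<Sum>i\<in>{1..<n}. rho b i * t (\<mu> * z (n-i)) l))"
    by (rule suminf_mult[symmetric], rule summable_sum) (use summable_mult[OF sm] in auto)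
  also have "\<dots> \<le> suminf (\<lambda>l. t (\<mu> * z n) (Suc l))"
  proof (rule suminf_le)
    fix l
    have K: "\<tau> powr b * (\<Sum>i\<in>{1..<n}. rho b i * z (n-i) ^ l / Gamma (1 + real l * b))
         \<le> z n ^ Suc l / Gamma (1 + real (Suc l) * b)"
      unfolding z_def by (rule key_sum[OF b n tau])
    have "\<mu> * \<tau> powr b * (\<Sum>i\<in>{1..<n}. rho b i * t (\<mu> * z (n-i)) l)
        = \<mu> ^ Suc l * (\<tau> powr b * (\<Sum>i\<in>{1..<n}. rho b i * z (n-i) ^ l / Gamma (1 + real l * b)))"
      by (simp add: t_def sum_distrib_left power_mult_distrib algebra_simps)
    also have "\<dots> \<le> \<mu> ^ Suc l * (z n ^ Suc l / Gamma (1 + real (Suc l) * b))"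
      by (rule mult_left_mono[OF K]) (use mu in simp)
    also have "\<dots> = t (\<mu> * z n) (Suc l)"
      by (simp add: t_def power_mult_distrib)
    finally show "\<mu> * \<tau> powr b * (\<Sum>i\<in>{1..<n}. rho b i * t (\<mu> * z (n-i)) l) \<le> t (\<mu> * z n) (Suc l)" .
  next
    show "summable (\<lambda>l. \<mu> * \<tau> powr b * (\<Sum>i\<in>{1..<n}. rho b i * t (\<mu> * z (n-i)) l))"
      by (rule summable_mult, rule summable_sum) (use summable_mult[OF sm] in auto)
  next
    show "summable (\<lambda>l. t (\<mu> * z n) (Suc l))"
      using sm[of n] by (simp add: summable_Suc_iff)
  qed
  also have "\<dots> = suminf (t (\<mu> * z n)) - 1"
    by (subst suminf_split_head[OF sm]) (simp add: t_def)
  finally have X: "\<mu> * \<tau> powr b * (\<Sum>i\<in>{1..<n}. rho b i * suminf (t (\<mu> * z (n-i)))) \<le> suminf (t (\<mu> * z n)) - 1" .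
  have ml': "mittag_leffler b w = suminf (t w)" for w by (simp add: mittag_leffler_def t_def)
  show ?thesis unfolding ml' using X by (simp add: z_def)
qed

lemma conv_identity:
  "(\<Sum>i=0..m. varpi b i * rho b (m - i)) = (if m = 0 then 1 else 0)"
proof -
  have "(\<Sum>i=0..m. varpi b i * rho b (m - i)) = (\<Sum>i=0..m. (-1)^m * ((b gchoose i) * ((-b) gchoose (m - i))))"
  proof (rule sum.cong[OF refl])
    fix i assume "i \<in> {0..m}"
    hence "(-1::real)^i * (-1)^(m-i) = (-1)^m" by (simp add: power_add[symmetric])
    thus "varpi b i * rho b (m - i) = (-1)^m * ((b gchoose i) * ((-b) gchoose (m - i)))"
      unfolding varpi_def rho_def by (metis (no_types, lifting) mult.assoc mult.left_commute)
  qed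
  also have "\<dots> = (-1)^m * ((b + -b) gchoose m)"
    by (simp add: sum_distrib_left[symmetric] gbinomial_Vandermonde)
  also have "\<dots> = (if m = 0 then 1 else 0)" by (simp add: gbinomial_0_left)
  finally show ?thesis .
qed

lemma inversion:
  fixes d :: "nat \<Rightarrow> real"
  shows "(\<Sum>k=0..n. rho b (n - k) * (\<Sum>j=0..k. varpi b (k - j) * d j)) = d n"
proof -
  define A where "A = Abs_fps (rho b)"
  define B where "B = Abs_fps (varpi b)"
  define C where "C = Abs_fps d"
  have BA: "B * A = 1"
  proof (rule fps_ext)
    fix m show "fps_nth (B * A) m = fps_nth (1 :: real fps) m"
      using conv_identity[of b m] by (simp add: fps_mult_nth A_def B_def)
  qed
  have "fps_nth ((C * B) * A) n = d n" by (simp add: mult.assoc BA C_def)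
  moreover have "fps_nth ((C * B) * A) n = (\<Sum>k=0..n. (\<Sum>j=0..k. d j * varpi b (k - j)) * rho b (n - k))"
    by (simp add: fps_mult_nth A_def B_def C_def)
  ultimately show ?thesis by (simp add: mult.commute)
qed

lemma rev_sum: "(\<Sum>l=1..(k::nat). f l) = (\<Sum>i<k. f (k - i))"
proof (rule sum.reindex_bij_witness[of _ "\<lambda>i. k - i" "\<lambda>l. k - l"])
  fix a assume "a \<in> {1..k}"
  then show "k - (k - a) = a" "k - a \<in> {..<k}" "f (k - (k - a)) = f a" by auto
next
  fix b assume "b \<in> {..<k}"
  then show "k - (k - b) = b" "k - b \<in> {1..k}" by auto
qed

theorem corollary2p1:
  fixes \<beta> T \<tau> \<Lambda> :: real and nT :: nat
    and g lam v :: "nat \<Rightarrow> real"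
  assumes "0 < \<beta>" "\<beta> < 1" "0 < T" "0 < nT"
    and "\<tau> = T / real nT"
    and "\<forall>k\<le>nT. 0 \<le> g k"
    and "\<forall>l<nT. 0 \<le> lam l"
    and "\<forall>k. 1 \<le> k \<and> k \<le> nT \<longrightarrow> (\<Sum>l=0..k-1. lam l) \<le> \<Lambda>"
    and "\<tau> powr \<beta> * (2 * \<Lambda> * (1 + \<beta>)) \<le> 1"
    and "\<forall>k\<le>nT. 0 \<le> v k"
    and "\<forall>k. 1 \<le> k \<and> k \<le> nT \<longrightarrow>
           frac_diff \<beta> \<tau> v k \<le> (\<Sum>l=1..k. lam (k - l) * v l) + g k"
  shows "\<forall>k. 1 \<le> k \<and> k \<le> nT \<longrightarrow>
           v k \<le> 2 * mittag_leffler \<beta> (2 * \<Lambda> * (real k * \<tau>) powr \<beta>) *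
             (v 0 + (MAX m\<in>{1..k}. \<Sum>j=0..m. \<tau> powr \<beta> * rho \<beta> (m - j) * g j))"
proof (intro allI impI)
  have b: "0 < \<beta>" "\<beta> < 1" using assms(1,2) by auto
  have tau: "\<tau> > 0" using assms(3,4,5) by simp
  have gnn: "\<And>k. k \<le> nT \<Longrightarrow> 0 \<le> g k" using assms(6) by auto
  have lnn: "\<And>l. l < nT \<Longrightarrow> 0 \<le> lam l" using assms(7) by auto
  have lamsum: "\<And>k. 1 \<le> k \<Longrightarrow> k \<le> nT \<Longrightarrow> (\<Sum>l=0..k-1. lam l) \<le> \<Lambda>" using assms(8) by auto
  have vnn: "\<And>k. k \<le> nT \<Longrightarrow> 0 \<le> v k" using assms(10) by auto
  have ineq: "\<And>k. 1 \<le> k \<Longrightarrow> k \<le> nT \<Longrightarrow> frac_diff \<beta> \<tau> v k \<le> (\<Sum>l=1..k. lam (k - l) * v l) + g k"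
    using assms(11) by auto
  have rnn: "\<And>j. 0 \<le> rho \<beta> j" using rho_nonneg b by auto
  have tb: "\<tau> powr \<beta> > 0" using tau by simp
  have Lnn: "\<Lambda> \<ge> 0" using lamsum[of 1] lnn[of 0] assms(4) by simp
  define c where "c = \<Lambda> * \<tau> powr \<beta>"
  have c0: "c \<ge> 0" using Lnn tb by (simp add: c_def)
  have c: "c \<le> 1/2"
  proof -
    have "0 \<le> \<beta> * (\<tau> powr \<beta> * \<Lambda>)" using b tb Lnn by simp
    moreover have "\<tau> powr \<beta> * (2 * \<Lambda> * (1 + \<beta>)) = 2 * (\<tau> powr \<beta> * \<Lambda>) + 2 * (\<beta> * (\<tau> powr \<beta> * \<Lambda>))"
      by (simp add: algebra_simps)
    ultimately show ?thesis using assms(9) by (simp add: c_def mult.commute)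
  qed
  fix K assume K: "1 \<le> K \<and> K \<le> nT"
  define G where "G = (MAX m\<in>{1..K}. \<Sum>j=0..m. \<tau> powr \<beta> * rho \<beta> (m - j) * g j)"
  define F where "F = v 0 + G"
  have Gge: "(\<Sum>j=0..m. \<tau> powr \<beta> * rho \<beta> (m - j) * g j) \<le> G" if "1 \<le> m" "m \<le> K" for m
    unfolding G_def by (rule Max_ge) (use that in auto)
  have Gnn: "G \<ge> 0"
  proof -
    have "0 \<le> (\<Sum>j=0..1. \<tau> powr \<beta> * rho \<beta> (1 - j) * g j)"
      by (rule sum_nonneg) (use tb rnn gnn K in auto)
    also have "\<dots> \<le> G" by (rule Gge) (use K in auto)
    finally show ?thesis .
  qed
  have Fnn: "F \<ge> 0" using Gnn vnn[of 0] by (simp add: F_def)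
  define V where "V = (\<lambda>n. Max (v ` {1..n}))"
  have Vge: "v l \<le> V n" if "1 \<le> l" "l \<le> n" for l n
    unfolding V_def by (rule Max_ge) (use that in auto)
  have Vex: "\<exists>m\<in>{1..n}. V n = v m" if "1 \<le> n" for n
  proof -
    have "Max (v ` {1..n}) \<in> v ` {1..n}" by (rule Max_in) (use that in auto)
    thus ?thesis unfolding V_def by auto
  qed
  have Vnn: "V n \<ge> 0" if "1 \<le> n" "n \<le> nT" for n
    using Vge[of n n] vnn[of n] that by simp
  have Vmono: "V p \<le> V q" if "1 \<le> p" "p \<le> q" for p q
    unfolding V_def by (rule Max_mono) (use that in auto)
  define R where "R = (\<lambda>k. \<Sum>l=1..k. lam (k - l) * v l)"
  have Rb: "R k \<le> \<Lambda> * V k" if "1 \<le> k" "k \<le> K" for k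
  proof -
    have "R k \<le> (\<Sum>l=1..k. lam (k - l) * V k)"
      unfolding R_def by (rule sum_mono, rule mult_left_mono) (use that K Vge lnn in auto)
    also have "\<dots> = V k * (\<Sum>l=1..k. lam (k - l))" by (simp add: sum_distrib_left mult.commute)
    also have "(\<Sum>l=1..k. lam (k - l)) = (\<Sum>i<k. lam (k - (k - i)))" by (rule rev_sum)
    also have "\<dots> = (\<Sum>l=0..k-1. lam l)"
    proof -
      have e: "{..<k} = {0..k-1}" using that by auto
      have "(\<Sum>i<k. lam (k - (k - i))) = (\<Sum>i<k. lam i)" by (rule sum.cong) auto
      thus ?thesis by (simp only: e)
    qed
    also have "V k * (\<Sum>l=0..k-1. lam l) \<le> V k * \<Lambda>"
      by (rule mult_left_mono) (use lamsum Vnn that K in auto)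
    finally show ?thesis by (simp add: mult.commute)
  qed
  define Q where "Q = (\<lambda>m. \<Sum>i<m. rho \<beta> i * V (m - i))"
  have step1: "v m \<le> F + c * Q m" if m: "1 \<le> m" "m \<le> K" for m
  proof -
    define Sd where "Sd = (\<lambda>k. \<Sum>j=0..k. varpi \<beta> (k - j) * (v j - v 0))"
    have inv: "(\<Sum>k=0..m. rho \<beta> (m - k) * Sd k) = v m - v 0"
      unfolding Sd_def by (rule inversion)
    have "(\<Sum>k=0..m. rho \<beta> (m - k) * Sd k) = rho \<beta> (m - 0) * Sd 0 + (\<Sum>k=Suc 0..m. rho \<beta> (m - k) * Sd k)"
      by (rule sum.atLeast_Suc_atMost) simp
    hence inv1: "(\<Sum>k=1..m. rho \<beta> (m - k) * Sd k) = v m - v 0"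
      using inv by (simp add: Sd_def)
    have Sdb: "Sd k \<le> \<tau> powr \<beta> * (R k + g k)" if "1 \<le> k" "k \<le> m" for k
    proof -
      have "Sd k = \<tau> powr \<beta> * frac_diff \<beta> \<tau> v k"
        unfolding frac_diff_def Sd_def using tau by (simp add: powr_minus field_simps)
      also have "\<dots> \<le> \<tau> powr \<beta> * (R k + g k)"
        by (rule mult_left_mono) (use ineq[of k] that m K tb in \<open>auto simp: R_def\<close>)
      finally show ?thesis .
    qed
    have "v m - v 0 \<le> (\<Sum>k=1..m. rho \<beta> (m - k) * (\<tau> powr \<beta> * (R k + g k)))"
      unfolding inv1[symmetric] by (rule sum_mono, rule mult_left_mono) (use Sdb rnn in auto)
    also have "\<dots> = \<tau> powr \<beta> * (\<Sum>k=1..m. rho \<beta> (m - k) * R k) + (\<Sum>k=1..m. \<tau> powr \<beta> * rho \<beta> (m - k) * g k)"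
      by (simp add: sum.distrib sum_distrib_left algebra_simps)
    also have "(\<Sum>k=1..m. \<tau> powr \<beta> * rho \<beta> (m - k) * g k) \<le> (\<Sum>k=0..m. \<tau> powr \<beta> * rho \<beta> (m - k) * g k)"
      by (rule sum_mono2) (use tb rnn gnn m K in auto)
    also have "\<dots> \<le> G" by (rule Gge[OF m])
    also have "(\<Sum>k=1..m. rho \<beta> (m - k) * R k) \<le> (\<Sum>k=1..m. rho \<beta> (m - k) * (\<Lambda> * V k))"
      by (rule sum_mono, rule mult_left_mono) (use Rb rnn m in auto)
    also have "\<dots> = \<Lambda> * (\<Sum>k=1..m. rho \<beta> (m - k) * V k)"
      by (simp add: sum_distrib_left algebra_simps)
    also have "(\<Sum>k=1..m. rho \<beta> (m - k) * V k) = (\<Sum>i<m. rho \<beta> (m - (m - i)) * V (m - i))"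
      by (rule rev_sum)
    also have "\<dots> = Q m" unfolding Q_def by (rule sum.cong) auto
    finally show ?thesis using tb by (simp add: F_def c_def algebra_simps)
  qed
  have Qmono: "Q m \<le> Q n" if "1 \<le> m" "m \<le> n" "n \<le> K" for m n
  proof -
    have "Q m \<le> (\<Sum>i<m. rho \<beta> i * V (n - i))"
      unfolding Q_def by (rule sum_mono, rule mult_left_mono) (use that Vmono rnn in auto)
    also have "\<dots> \<le> (\<Sum>i<n. rho \<beta> i * V (n - i))"
      by (rule sum_mono2) (use that K rnn Vnn in auto)
    finally show ?thesis by (simp add: Q_def)
  qed
  define Tn where "Tn = (\<lambda>n. \<Sum>i\<in>{1..<n}. rho \<beta> i * V (n - i))"
  have Qsplit: "Q n = V n + Tn n" if "1 \<le> n" for n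
  proof -
    have "{..<n} = insert 0 {1..<n}" using that by auto
    thus ?thesis unfolding Q_def Tn_def by (simp add: rho_0)
  qed
  have step2: "V n \<le> 2 * F + 2 * c * Tn n" if n: "1 \<le> n" "n \<le> K" for n
  proof -
    obtain m where m: "m \<in> {1..n}" "V n = v m" using Vex[OF n(1)] by blast
    have "V n \<le> F + c * Q m" using step1[of m] m n by auto
    also have "\<dots> \<le> F + c * Q n" using Qmono[of m n] m n c0 by (auto intro: mult_left_mono)
    also have "\<dots> = F + c * V n + c * Tn n" using Qsplit[OF n(1)] by (simp add: algebra_simps)
    finally have 1: "V n \<le> F + c * V n + c * Tn n" .
    have "c * V n \<le> 1/2 * V n" by (rule mult_right_mono[OF c]) (use Vnn n K in auto)
    with 1 show ?thesis by linarith
  qed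
  define Mlf where "Mlf = (\<lambda>n::nat. mittag_leffler \<beta> (2 * \<Lambda> * (real n * \<tau>) powr \<beta>))"
  have main: "1 \<le> n \<longrightarrow> n \<le> K \<longrightarrow> V n \<le> 2 * F * Mlf n" for n
  proof (induction n rule: less_induct)
    case (less n)
    show ?case
    proof (intro impI)
      assume n: "1 \<le> n" "n \<le> K"
      have "Tn n \<le> (\<Sum>i\<in>{1..<n}. rho \<beta> i * (2 * F * Mlf (n - i)))"
        unfolding Tn_def by (rule sum_mono, rule mult_left_mono) (use less n rnn in auto)
      also have "\<dots> = 2 * F * (\<Sum>i\<in>{1..<n}. rho \<beta> i * Mlf (n - i))"
        by (simp add: sum_distrib_left algebra_simps)
      finally have T: "Tn n \<le> 2 * F * (\<Sum>i\<in>{1..<n}. rho \<beta> i * Mlf (n - i))" .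
      have "V n \<le> 2 * F + 2 * c * Tn n" by (rule step2[OF n])
      also have "\<dots> \<le> 2 * F + 2 * c * (2 * F * (\<Sum>i\<in>{1..<n}. rho \<beta> i * Mlf (n - i)))"
        using mult_left_mono[OF T, of "2 * c"] c0 by simp
      also have "\<dots> = 2 * F * (1 + 2 * \<Lambda> * \<tau> powr \<beta> * (\<Sum>i\<in>{1..<n}. rho \<beta> i * Mlf (n - i)))"
        by (simp add: c_def algebra_simps)
      also have "\<dots> \<le> 2 * F * Mlf n"
      proof (rule mult_left_mono)
        show "1 + 2 * \<Lambda> * \<tau> powr \<beta> * (\<Sum>i\<in>{1..<n}. rho \<beta> i * Mlf (n - i)) \<le> Mlf n"
          unfolding Mlf_def by (rule ml_step[OF b n(1) tau]) (use Lnn in simp)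
      qed (use Fnn in simp)
      finally show "V n \<le> 2 * F * Mlf n" .
    qed
  qed
  have "v K \<le> V K" using Vge[of K K] K by simp
  also have "\<dots> \<le> 2 * F * Mlf K" using main[of K] K by simp
  finally show "v K \<le> 2 * mittag_leffler \<beta> (2 * \<Lambda> * (real K * \<tau>) powr \<beta>) *
             (v 0 + (MAX m\<in>{1..K}. \<Sum>j=0..m. \<tau> powr \<beta> * rho \<beta> (m - j) * g j))"
    by (simp add: Mlf_def F_def G_def algebra_simps)
qed

end
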